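(* Fix $k\in\mathbb{Z}_{\geq 1}$ and $m\geq k$. The map $W_k$, from $\mathrm{Av}_m(312)$ to the set of walks of size $m-k+1$ in the overlap graph $\mathcal{O}v(k,\mathrm{Av}(312))$, is surjective.
   Context: For $n\ge1$, $\mathcal S_n$ is the set of permutations of $[n]$; by convention $\mathrm{Av}_0(B)$ consists of the empty permutation. For $I=\{i_1<\dots<i_m\}$, $\mathrm{pat}_I(\sigma)$ is the unique permutation whose entries are in the same relative order as $\sigma(i_1),\dots,\sigma(i_m)$. $\sigma$ avoids $\pi$ if no $I$ has $\mathrm{pat}_I(\sigma)=\pi$; $\mathrm{Av}_n(B)$ is the set of size-$n$ permutations avoiding all elements of $B$. Overlap graph: $\mathcal{O}v(k,\mathrm{Av}(B))$ is the directed multigraph with vertex set $\mathrm{Av}_{k-1}(B)$ and, for each $\pi\in\mathrm{Av}_k(B)$, one edge labelled $\pi$ from $\mathrm{pat}_{\{1,\dots,k-1\}}(\pi)$ to $\mathrm{pat}_{\{2,\dots,k\}}(\pi)$. A walk of size $s$ is a sequence of $s$ edges $(e_1,\dots,e_s)$ with the arrival vertex of $e_i$ equal to the start vertex of $e_{i+1}$. For $\sigma\in\mathrm{Av}_m(B)$ with $m\ge k$, $W_k(\sigma)=(e_1,\dots,e_{m-k+1})$ where $e_i$ is the edge labelled $\mathrm{pat}_{\{i,i+1,\dots,i+k-1\}}(\sigma)$; this is a walk in $\mathcal{O}v(k,\mathrm{Av}(B))$. *)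

theory Defs
  imports Main
begin

text \<open>Permutations of [n] are represented as lists (one-line notation) of length n
  containing each of 1..n exactly once.  List positions are 0-based internally.\<close>

definition is_perm :: "nat list \<Rightarrow> bool" where
  "is_perm xs \<longleftrightarrow> distinct xs \<and> set xs = {1..length xs}"

definition std :: "nat list \<Rightarrow> nat list" where
  "std xs = map (\<lambda>x. card {y \<in> set xs. y \<le> x}) xs"

definition pat :: "nat set \<Rightarrow> nat list \<Rightarrow> nat list" where
  "pat I \<sigma> = std (nths \<sigma> I)"

definition avoids :: "nat list \<Rightarrow> nat list \<Rightarrow> bool" where
  "avoids \<sigma> \<pi> \<longleftrightarrow> \<not> (\<exists>I. I \<subseteq> {..<length \<sigma>} \<and> pat I \<sigma> = \<pi>)"

definition Av :: "nat \<Rightarrow> nat list set \<Rightarrow> nat list set" where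
  "Av n B = {\<sigma>. length \<sigma> = n \<and> is_perm \<sigma> \<and> (\<forall>\<pi>\<in>B. avoids \<sigma> \<pi>)}"

text \<open>Overlap graph Ov(k, Av(B)): vertices Av_{k-1}(B); one edge labelled pi for each
  pi in Av_k(B), from pat_{1..k-1}(pi) to pat_{2..k}(pi).  Edges are identified with labels.\<close>
definition ov_start :: "nat \<Rightarrow> nat list \<Rightarrow> nat list" where
  "ov_start k \<pi> = pat {0..<k-1} \<pi>"

definition ov_end :: "nat \<Rightarrow> nat list \<Rightarrow> nat list" where
  "ov_end k \<pi> = pat {1..<k} \<pi>"

definition ov_walks :: "nat \<Rightarrow> nat list set \<Rightarrow> nat \<Rightarrow> nat list list set" where
  "ov_walks k B s = {es. length es = s \<and> (\<forall>e\<in>set es. e \<in> Av k B) \<and>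
      (\<forall>i. Suc i < s \<longrightarrow> ov_end k (es ! i) = ov_start k (es ! Suc i))}"

definition W :: "nat \<Rightarrow> nat list \<Rightarrow> nat list list" where
  "W k \<sigma> = map (\<lambda>i. pat {i..<i+k} \<sigma>) [0..<length \<sigma> - k + 1]"

end

theory Submission
  imports Defs
begin


lemma length_std[simp]: "length (std xs) = length xs" by (simp add: std_def)

lemma std_nth: "i < length xs \<Longrightarrow> std xs ! i = card {y \<in> set xs. y \<le> xs!i}"
  by (simp add: std_def)

lemma std_less:
  assumes "i < length xs" "j < length xs"
  shows "(std xs ! i < std xs ! j) \<longleftrightarrow> xs!i < xs!j"
proof
  assume "xs!i < xs!j"
  hence "{y \<in> set xs. y \<le> xs!i} \<subset> {y \<in> set xs. y \<le> xs!j}"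
  proof -
    have "xs!j \<in> {y \<in> set xs. y \<le> xs!j}" "xs!j \<notin> {y \<in> set xs. y \<le> xs!i}"
      using assms \<open>xs!i < xs!j\<close> by auto
    moreover have "{y \<in> set xs. y \<le> xs!i} \<subseteq> {y \<in> set xs. y \<le> xs!j}"
      using \<open>xs!i < xs!j\<close> by auto
    ultimately show ?thesis by blast
  qed
  thus "std xs ! i < std xs ! j" using assms by (simp add: std_nth psubset_card_mono)
next
  assume "std xs ! i < std xs ! j"
  moreover have "\<not> xs!i < xs!j \<Longrightarrow> card {y \<in> set xs. y \<le> xs!j} \<le> card {y \<in> set xs. y \<le> xs!i}"
    by (rule card_mono) auto
  ultimately show "xs!i < xs!j" using assms by (auto simp: std_nth)
qed

definition oiso :: "nat list \<Rightarrow> nat list \<Rightarrow> bool" where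
  "oiso xs ys \<longleftrightarrow> length xs = length ys \<and>
     (\<forall>i<length xs. \<forall>j<length xs. xs!i < xs!j \<longleftrightarrow> ys!i < ys!j)"

lemma oiso_std: "oiso xs (std xs)"
  by (simp add: oiso_def std_less)

lemma oiso_sym: "oiso xs ys \<Longrightarrow> oiso ys xs" by (auto simp: oiso_def)
lemma oiso_trans: "oiso xs ys \<Longrightarrow> oiso ys zs \<Longrightarrow> oiso xs zs" by (auto simp: oiso_def)

lemma std_eq_oiso: "std xs = std ys \<Longrightarrow> oiso xs ys"
  by (metis oiso_std oiso_sym oiso_trans)

lemma std_nth_distinct:
  assumes "distinct xs" "i < length xs"
  shows "std xs ! i = card {j. j < length xs \<and> xs!j \<le> xs!i}"
proof -
  have "{y \<in> set xs. y \<le> xs!i} = (\<lambda>j. xs!j) ` {j. j < length xs \<and> xs!j \<le> xs!i}"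
    by (auto simp: in_set_conv_nth)
  moreover have "inj_on (\<lambda>j. xs!j) {j. j < length xs \<and> xs!j \<le> xs!i}"
    using assms(1) by (auto simp: inj_on_def nth_eq_iff_index_eq)
  ultimately show ?thesis using assms by (simp add: std_nth card_image)
qed

lemma oiso_std_eq:
  assumes "distinct xs" "distinct ys" "oiso xs ys"
  shows "std xs = std ys"
proof (rule nth_equalityI)
  show "length (std xs) = length (std ys)" using assms(3) by (simp add: oiso_def)
  fix i assume i: "i < length (std xs)"
  have le: "\<And>a b. a < length xs \<Longrightarrow> b < length xs \<Longrightarrow> xs!a \<le> xs!b \<longleftrightarrow> ys!a \<le> ys!b"
    using assms(3) unfolding oiso_def by (metis not_le)
  have "{j. j < length xs \<and> xs!j \<le> xs!i} = {j. j < length ys \<and> ys!j \<le> ys!i}"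
    using le i assms(3) by (auto simp: oiso_def)
  thus "std xs ! i = std ys ! i" using i assms by (simp add: std_nth_distinct oiso_def)
qed

lemma is_perm_std: "is_perm xs \<Longrightarrow> std xs = xs"
proof (rule nth_equalityI)
  assume p: "is_perm xs"
  show "length (std xs) = length xs" by simp
  fix i assume i: "i < length (std xs)"
  hence xi: "xs!i \<in> {1..length xs}" using p by (auto simp: is_perm_def)
  have "{y \<in> set xs. y \<le> xs!i} = {1..xs!i}" using p xi by (auto simp: is_perm_def)
  thus "std xs ! i = xs ! i" using i by (simp add: std_nth)
qed

lemma oiso_take: "oiso xs ys \<Longrightarrow> oiso (take t xs) (take t ys)"
  by (auto simp: oiso_def)
lemma oiso_drop: "oiso xs ys \<Longrightarrow> oiso (drop t xs) (drop t ys)"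
  by (auto simp: oiso_def)

lemma oiso_map: "(\<And>a b. a \<in> set xs \<Longrightarrow> b \<in> set xs \<Longrightarrow> f a < f b \<longleftrightarrow> a < b) \<Longrightarrow> oiso (map f xs) xs"
  by (auto simp: oiso_def)

lemma oiso_snoc:
  assumes "oiso xs ys" "\<And>i. i < length xs \<Longrightarrow> (xs!i < a \<longleftrightarrow> ys!i < b) \<and> (a < xs!i \<longleftrightarrow> b < ys!i)"
  shows "oiso (xs @ [a]) (ys @ [b])"
  using assms unfolding oiso_def
  by (auto simp: nth_append less_Suc_eq)

lemma pat_window: "pat {i..<i+k} xs = std (take k (drop i xs))"
proof -
  have "{i..<i+k} = (+) i ` {..<k}" proof (auto simp: image_def)
    fix x assume "i \<le> x" "x < i + k" thus "\<exists>xa\<in>{..<k}. x = i + xa" by (intro bexI[of _ "x - i"]) auto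
  qed
  thus ?thesis by (simp add: pat_def flip: nths_drop)
qed

lemma nths_map_filter: "nths xs I = map (nth xs) (filter (\<lambda>i. i \<in> I) [0..<length xs])"
  by (induct xs rule: rev_induct) (auto simp: nths_append nth_append)




definition av312 :: "nat list \<Rightarrow> bool" where
  "av312 xs \<longleftrightarrow> \<not> (\<exists>i j l. i < j \<and> j < l \<and> l < length xs \<and> xs!j < xs!l \<and> xs!l < xs!i)"

lemma std_312: assumes "b < c" "c < a" shows "std [a,b,c] = [3,1,2]"
proof -
  have 1: "{y \<in> set [a,b,c]. y \<le> a} = {a,b,c}" using assms by auto
  have 2: "{y \<in> set [a,b,c]. y \<le> b} = {b}" using assms by auto
  have 3: "{y \<in> set [a,b,c]. y \<le> c} = {b,c}" using assms by auto
  show ?thesis unfolding std_def using assms by (simp only: list.map 1 2 3) simp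
qed

lemma filter_upt_3:
  assumes "i < j" "j < l" "l < n"
  shows "filter (\<lambda>t. t \<in> {i,j,l}) [0..<n] = [i,j,l]"
proof (rule sorted_distinct_set_unique)
  show "sorted (filter (\<lambda>t. t \<in> {i,j,l}) [0..<n])" using sorted_filter[of id "[0..<n]"] by simp
  show "distinct (filter (\<lambda>t. t \<in> {i,j,l}) [0..<n])" by simp
  show "sorted [i,j,l]" "distinct [i,j,l]" using assms by auto
  show "set (filter (\<lambda>t. t \<in> {i,j,l}) [0..<n]) = set [i,j,l]" using assms by auto
qed

lemma avoids_imp_av312: "avoids xs [3,1,2] \<Longrightarrow> av312 xs"
proof (unfold av312_def, rule notI, elim exE conjE)
  fix i j l assume a: "avoids xs [3,1,2]" "i < j" "j < l" "l < length xs" "xs!j < xs!l" "xs!l < xs!i"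
  have "pat {i,j,l} xs = [3,1,2]"
    unfolding pat_def nths_map_filter using a by (simp only: filter_upt_3 list.map std_312)
  moreover have "{i,j,l} \<subseteq> {..<length xs}" using a by auto
  ultimately show False using a(1) unfolding avoids_def by blast
qed

lemma av312_imp_avoids: "av312 xs \<Longrightarrow> avoids xs [3,1,2]"
proof (unfold avoids_def, rule notI, elim exE conjE)
  fix I assume a: "av312 xs" "I \<subseteq> {..<length xs}" "pat I xs = [3,1,2]"
  define L where "L = filter (\<lambda>t. t \<in> I) [0..<length xs]"
  define ys where "ys = map (nth xs) L"
  have sy: "std ys = [3,1,2]" using a(3) by (simp add: pat_def nths_map_filter ys_def L_def)
  have ly: "length ys = 3" using arg_cong[OF sy, of length] by simp
  hence lL: "length L = 3" by (simp add: ys_def)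
  have "ys!1 < ys!2" using std_less[of 1 ys 2] sy ly by simp
  moreover have "ys!2 < ys!0" using std_less[of 2 ys 0] sy ly by simp
  moreover have sL: "sorted_wrt (<) L" unfolding L_def by (simp add: sorted_wrt_filter)
  hence "L!0 < L!1" "L!1 < L!2" using lL by (auto simp: sorted_wrt_iff_nth_less)
  moreover have "L!2 \<in> set L" using lL by (intro nth_mem) simp
  hence "L!2 < length xs" unfolding L_def by simp
  ultimately show False using a(1) lL unfolding av312_def ys_def
    by (metis (no_types, lifting) nth_map numeral_3_eq_3 lessI less_trans zero_less_Suc One_nat_def Suc_1 numeral_2_eq_2)
qed

lemma avoids_iff: "avoids xs [3,1,2] \<longleftrightarrow> av312 xs"
  using avoids_imp_av312 av312_imp_avoids by blast




definition shift :: "nat \<Rightarrow> nat \<Rightarrow> nat" where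
  "shift x y = (if x \<le> y then Suc y else y)"

lemma shift_less_iff[simp]: "shift x a < shift x b \<longleftrightarrow> a < b"
  by (auto simp: shift_def)

lemma shift_inj: "inj (shift x)"
  by (rule injI) (metis less_irrefl nat_neq_iff shift_less_iff)

lemma shift_neq: "shift x y \<noteq> x" by (auto simp: shift_def)

lemma shift_lt_x: "shift x y < x \<longleftrightarrow> y < x" by (auto simp: shift_def)
lemma x_lt_shift: "x < shift x y \<longleftrightarrow> x \<le> y" by (auto simp: shift_def)

lemma is_perm_ext:
  assumes p: "is_perm \<sigma>" and x: "1 \<le> x" "x \<le> Suc (length \<sigma>)"
  shows "is_perm (map (shift x) \<sigma> @ [x])"
proof -
  let ?n = "length \<sigma>"
  have d: "distinct (map (shift x) \<sigma> @ [x])"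
    using p shift_neq[of x] by (auto simp: is_perm_def distinct_map inj_on_def shift_inj[THEN injD]) (metis shift_neq)
  have "set (map (shift x) \<sigma> @ [x]) = {1..Suc ?n}"
  proof
    show "set (map (shift x) \<sigma> @ [x]) \<subseteq> {1..Suc ?n}"
      using p x by (auto simp: is_perm_def shift_def)
    show "{1..Suc ?n} \<subseteq> set (map (shift x) \<sigma> @ [x])"
    proof
      fix z assume z: "z \<in> {1..Suc ?n}"
      show "z \<in> set (map (shift x) \<sigma> @ [x])"
      proof (cases "z = x")
        case False
        show ?thesis
        proof (cases "z < x")
          case True
          hence "z \<in> set \<sigma>" using p z x by (auto simp: is_perm_def)
          moreover have "shift x z = z" using True by (simp add: shift_def)
          ultimately show ?thesis by (metis UnI1 image_eqI set_append set_map)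
        next
          case False2: False
          hence "z - 1 \<in> set \<sigma>" using p z x False by (auto simp: is_perm_def)
          moreover have "shift x (z - 1) = z" using False2 False by (simp add: shift_def)
          ultimately show ?thesis by (metis UnI1 image_eqI set_append set_map)
        qed
      qed simp
    qed
  qed
  thus ?thesis using d by (simp add: is_perm_def)
qed




lemma extend:
  assumes sp: "is_perm \<sigma>" and sa: "av312 \<sigma>" and sl: "length \<sigma> = n"
    and k1: "1 \<le> k" and kn: "k \<le> n"
    and ep: "is_perm e" and el: "length e = k" and ea: "av312 e"
    and lw: "std (drop (n - (k-1)) \<sigma>) = std (take (k-1) e)"
  shows "\<exists>\<tau>. is_perm \<tau> \<and> av312 \<tau> \<and> length \<tau> = Suc n \<and> W k \<tau> = W k \<sigma> @ [e]"
proof -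
  define s0 where "s0 = n - (k-1)"
  define v where "v = drop s0 \<sigma>"
  define c where "c = e!(k-1)"
  define J where "J = {j. j < k-1 \<and> c < e!j}"
  define x where "x = (if J = {} then Suc n else Min ((\<lambda>j. v!j) ` J))"
  define \<tau> where "\<tau> = map (shift x) \<sigma> @ [x]"
  have lv: "length v = k - 1" using sl kn k1 by (simp add: v_def s0_def)
  have ds: "distinct \<sigma>" using sp by (simp add: is_perm_def)
  have sset: "set \<sigma> = {1..n}" using sp sl by (simp add: is_perm_def)
  have de: "distinct e" using ep by (simp add: is_perm_def)
  have dv: "distinct v" using ds by (simp add: v_def)
  have vnth: "\<And>j. j < k-1 \<Longrightarrow> v!j = \<sigma>!(s0+j)" using lv sl kn by (simp add: v_def)
  have vo: "oiso v (take (k-1) e)" using lw std_eq_oiso by (simp add: v_def s0_def)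
  have vrange: "\<And>j. j < k-1 \<Longrightarrow> 1 \<le> v!j \<and> v!j \<le> n"
    using lv sset by (metis atLeastAtMost_iff nth_mem set_drop_subset subsetD v_def)
  have xcases: "(J = {} \<and> x = Suc n) \<or> (\<exists>j0. j0 \<in> J \<and> x = v!j0 \<and> (\<forall>j\<in>J. v!j0 \<le> v!j))"
  proof (cases "J = {}")
    case False
    have fin: "finite J" by (simp add: J_def)
    have "Min ((\<lambda>j. v!j) ` J) \<in> (\<lambda>j. v!j) ` J" using fin False by (intro Min_in) auto
    then obtain j0 where "j0 \<in> J" "Min ((\<lambda>j. v!j) ` J) = v!j0" by auto
    moreover have "\<forall>j\<in>J. Min ((\<lambda>j. v!j) ` J) \<le> v!j" using fin by auto
    ultimately show ?thesis using False by (auto simp: x_def)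
  qed (simp add: x_def)
  have x1: "1 \<le> x \<and> x \<le> Suc n" using xcases vrange by (auto simp: J_def) (meson le_SucI)
  have key: "\<And>j. j < k-1 \<Longrightarrow> (x \<le> v!j \<longleftrightarrow> c < e!j)"
  proof -
    fix j assume j: "j < k-1"
    show "x \<le> v!j \<longleftrightarrow> c < e!j"
    proof (cases "J = {}")
      case True
      thus ?thesis using xcases vrange[OF j] j by (auto simp: J_def)
    next
      case False
      then obtain j0 where j0: "j0 \<in> J" "x = v!j0" "\<forall>j\<in>J. v!j0 \<le> v!j" using xcases by auto
      show ?thesis
      proof
        assume "c < e!j" thus "x \<le> v!j" using j j0 by (auto simp: J_def)
      next
        assume xv: "x \<le> v!j"
        show "c < e!j"
        proof (cases "v!j0 = v!j")
          case True
          hence "j0 = j" using dv lv j j0(1) by (auto simp: J_def nth_eq_iff_index_eq)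
          thus ?thesis using j0 by (simp add: J_def)
        next
          case False
          hence "v!j0 < v!j" using xv j0 by simp
          hence "take (k-1) e ! j0 < take (k-1) e ! j" using vo j j0(1) lv
            by (auto simp: oiso_def J_def)
          thus ?thesis using j j0(1) by (auto simp: J_def)
        qed
      qed
    qed
  qed
  have tp: "is_perm \<tau>" unfolding \<tau>_def using is_perm_ext[OF sp] x1 sl by simp
  have tl: "length \<tau> = Suc n" by (simp add: \<tau>_def sl)
  have dt: "distinct \<tau>" using tp by (simp add: is_perm_def)
  have tnth: "\<And>t. t < n \<Longrightarrow> \<tau>!t = shift x (\<sigma>!t)" using sl by (simp add: \<tau>_def nth_append)
  have tn: "\<tau>!n = x" using sl by (simp add: \<tau>_def nth_append)
  have dlast: "drop s0 \<tau> = map (shift x) v @ [x]"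
    using sl kn by (simp add: \<tau>_def v_def s0_def drop_map)
  have elast: "e = take (k-1) e @ [c]"
    using el k1 by (metis c_def Suc_diff_1 less_imp_diff_less lessI take_Suc_conv_app_nth take_all
        order_refl less_le_trans zero_less_one)
  have olast: "oiso (drop s0 \<tau>) e"
  proof -
    have "oiso (map (shift x) v) v" by (rule oiso_map) simp
    hence o1: "oiso (map (shift x) v) (take (k-1) e)" using vo oiso_trans by blast
    have "oiso (map (shift x) v @ [x]) (take (k-1) e @ [c])"
    proof (rule oiso_snoc[OF o1])
      fix i assume i: "i < length (map (shift x) v)"
      hence i': "i < k-1" using lv by simp
      have ne: "e!i \<noteq> c" using de el i' k1 unfolding c_def by (simp add: nth_eq_iff_index_eq)
      show "(map (shift x) v ! i < x \<longleftrightarrow> take (k-1) e ! i < c) \<and> (x < map (shift x) v ! i \<longleftrightarrow> c < take (k-1) e ! i)"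
        using key[OF i'] i' lv ne by (auto simp: shift_lt_x x_lt_shift)
    qed
    thus ?thesis using dlast elast by simp
  qed
  have stdlast: "std (drop s0 \<tau>) = e"
    using oiso_std_eq[OF _ de olast] dt is_perm_std[OF ep] by simp
  have lenl: "length (drop s0 \<tau>) = k" using tl kn k1 by (simp add: s0_def)
  have win: "\<And>a b. s0 \<le> a \<Longrightarrow> a < b \<Longrightarrow> b < n \<Longrightarrow> \<tau>!b < x \<Longrightarrow> x < \<tau>!a \<Longrightarrow> False"
  proof -
    fix a b assume ab: "s0 \<le> a" "a < b" "b < n" "\<tau>!b < x" "x < \<tau>!a"
    let ?L = "drop s0 \<tau>"
    have "?L!(b-s0) = \<tau>!b" "?L!(a-s0) = \<tau>!a" "?L!(k-1) = x"
      using ab tl kn k1 tn by (auto simp: s0_def)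
    moreover have "b - s0 < k" "a - s0 < k" "k - 1 < k" using ab kn k1 by (auto simp: s0_def)
    ultimately have "e!(b-s0) < e!(k-1)" "e!(k-1) < e!(a-s0)"
      using olast lenl ab unfolding oiso_def by (metis)+
    moreover have "a - s0 < b - s0" "b - s0 < k-1" using ab kn k1 by (auto simp: s0_def)
    ultimately show False using ea el k1 unfolding av312_def by auto
  qed
  have ta: "av312 \<tau>"
  proof (unfold av312_def, rule notI, elim exE conjE)
    fix i j l assume a: "i < j" "j < l" "l < length \<tau>" "\<tau>!j < \<tau>!l" "\<tau>!l < \<tau>!i"
    show False
    proof (cases "l < n")
      case True
      hence "\<sigma>!j < \<sigma>!l" "\<sigma>!l < \<sigma>!i" using a tnth by auto
      thus False using sa a True sl unfolding av312_def by auto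
    next
      case False
      hence ln: "l = n" using a tl by simp
      have jn: "j < n" using a ln by simp
      have ti: "x < \<tau>!i" and tj: "\<tau>!j < x" using a ln tn by auto
      have si: "x \<le> \<sigma>!i" using ti tnth[of i] a jn by (simp add: x_lt_shift)
      have sj: "\<sigma>!j < x" using tj tnth[of j] jn by (simp add: shift_lt_x)
      show False
      proof (cases "J = {}")
        case True
        hence "x = Suc n" using xcases by auto
        moreover have "\<sigma>!i \<le> n" using sset a jn sl by (metis atLeastAtMost_iff nth_mem less_trans)
        ultimately show False using si by simp
      next
        case False
        then obtain j0 where j0: "j0 \<in> J" "x = v!j0" using xcases by auto
        define p where "p = s0 + j0"
        have pj: "j0 < k-1" using j0 by (simp add: J_def)
        have xp: "x = \<sigma>!p" using vnth[OF pj] j0 by (simp add: p_def)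
        have p: "s0 \<le> p" "p < n" using pj kn k1 by (auto simp: p_def s0_def)
        show False
        proof (cases "s0 \<le> i")
          case True thus False using win[of i j] a jn ti tj by simp
        next
          case False
          hence "i \<noteq> p" using p by auto
          hence "\<sigma>!i \<noteq> \<sigma>!p" using ds sl p a jn by (simp add: nth_eq_iff_index_eq)
          hence pi: "\<sigma>!p < \<sigma>!i" using si xp by simp
          have "j \<noteq> p" using sj xp by auto
          then consider "j < p" | "p < j" by linarith
          thus False
          proof cases
            case 1
            thus False using sa a pi sj xp p sl unfolding av312_def by auto
          next
            case 2
            have "x < \<tau>!p" using tnth[OF p(2)] xp by (simp add: x_lt_shift)
            thus False using win[of p j] 2 p jn tj by simp
          qed
        qed
      qed
    qed
  qed
  have Wt: "W k \<tau> = W k \<sigma> @ [e]"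
  proof -
    have ns: "Suc n - k + 1 = Suc (n - k + 1)" using kn by simp
    have s0e: "n - k + 1 = s0" using kn k1 by (simp add: s0_def)
    have "W k \<tau> = map (\<lambda>i. pat {i..<i+k} \<tau>) [0..<n-k+1] @ [pat {n-k+1..<n-k+1+k} \<tau>]"
      proof -
        have u: "[0..<length \<tau> - k + 1] = [0..<n-k+1] @ [n-k+1]"
        proof -
          have "length \<tau> - k + 1 = Suc (n-k+1)" using tl kn by simp
          thus ?thesis by (simp del: upt_Suc add: upt_Suc_append)
        qed
        show ?thesis by (simp only: W_def u map_append list.map)
      qed
    moreover have "pat {n-k+1..<n-k+1+k} \<tau> = e"
    proof -
      have "pat {s0..<s0+k} \<tau> = std (take k (drop s0 \<tau>))" by (rule pat_window)
      also have "take k (drop s0 \<tau>) = drop s0 \<tau>" using lenl by (metis take_all order_refl)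
      finally show ?thesis using stdlast s0e by metis
    qed
    moreover have "map (\<lambda>i. pat {i..<i+k} \<tau>) [0..<n-k+1] = map (\<lambda>i. pat {i..<i+k} \<sigma>) [0..<n-k+1]"
    proof (rule map_cong[OF refl])
      fix i assume "i \<in> set [0..<n-k+1]"
      hence i: "i + k \<le> n" using kn by auto
      have "take k (drop i \<tau>) = map (shift x) (take k (drop i \<sigma>))"
        using i sl by (simp add: \<tau>_def take_map drop_map)
      moreover have "oiso (map (shift x) (take k (drop i \<sigma>))) (take k (drop i \<sigma>))"
        by (rule oiso_map) simp
      moreover have "distinct (map (shift x) (take k (drop i \<sigma>)))"
        using ds inj_on_subset[OF shift_inj[of x] subset_UNIV] by (simp add: distinct_map)
      ultimately show "pat {i..<i+k} \<tau> = pat {i..<i+k} \<sigma>"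
        using ds by (simp add: pat_window oiso_std_eq)
    qed
    moreover have "W k \<sigma> = map (\<lambda>i. pat {i..<i+k} \<sigma>) [0..<n-k+1]"
      unfolding W_def sl ..
    ultimately show ?thesis by simp
  qed
  show ?thesis using tp ta tl Wt by blast
qed




lemma oiso_distinct: "oiso xs ys \<Longrightarrow> distinct xs \<Longrightarrow> distinct ys"
  unfolding oiso_def distinct_conv_nth by (metis linorder_neqE_nat less_irrefl)

lemma ov_end_std:
  assumes "length u = k" "k \<ge> 1" "distinct u"
  shows "ov_end k (std u) = std (drop 1 u)"
proof -
  have "ov_end k (std u) = std (take (k-1) (drop 1 (std u)))"
    using pat_window[of 1 "k-1" "std u"] assms by (simp add: ov_end_def)
  also have "take (k-1) (drop 1 (std u)) = drop 1 (std u)" using assms by simp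
  also have "std (drop 1 (std u)) = std (drop 1 u)"
  proof (rule oiso_std_eq)
    show "distinct (drop 1 (std u))" using oiso_distinct[OF oiso_std assms(3)] by simp
    show "distinct (drop 1 u)" using assms by simp
    show "oiso (drop 1 (std u)) (drop 1 u)" by (rule oiso_drop[OF oiso_sym[OF oiso_std]])
  qed
  finally show ?thesis .
qed

lemma avoids_iff': "avoids xs [3, Suc 0, 2] \<longleftrightarrow> av312 xs" using avoids_iff by simp

lemma ov_start_eq: "ov_start k e = std (take (k-1) e)"
  using pat_window[of 0 "k-1" e] by (simp add: ov_start_def)

lemma main_aux:
  assumes k1: "1 \<le> k"
  shows "\<forall>w \<in> ov_walks k {[3,1,2]} (Suc t). \<exists>\<sigma>\<in>Av (Suc t + k - 1) {[3,1,2]}. W k \<sigma> = w"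
proof (induction t)
  case 0
  show ?case
  proof
    fix w assume "w \<in> ov_walks k {[3,1,2]} (Suc 0)"
    then obtain e where w: "w = [e]" and e: "e \<in> Av k {[3,1,2]}"
      by (auto simp: ov_walks_def length_Suc_conv)
    have el: "length e = k" and ep: "is_perm e" using e by (auto simp: Av_def)
    have "W k e = [pat {0..<0+k} e]" using el by (simp add: W_def)
    also have "\<dots> = [e]" using el is_perm_std[OF ep] by (simp only: pat_window) simp
    finally show "\<exists>\<sigma>\<in>Av (Suc 0 + k - 1) {[3,1,2]}. W k \<sigma> = w" using e w by auto
  qed
next
  case (Suc t)
  show ?case
  proof
    fix w assume wW: "w \<in> ov_walks k {[3,1,2]} (Suc (Suc t))"
    define w' where "w' = butlast w"
    define e where "e = last w"
    have lw: "length w = Suc (Suc t)" using wW by (simp add: ov_walks_def)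
    have wsplit: "w = w' @ [e]" using lw unfolding w'_def e_def
      by (metis append_butlast_last_id list.size(3) nat.distinct(1))
    have lw': "length w' = Suc t" using lw by (simp add: w'_def)
    have w'nth: "\<And>i. i < Suc t \<Longrightarrow> w'!i = w!i" using lw by (simp add: w'_def nth_butlast)
    have "w' \<in> ov_walks k {[3,1,2]} (Suc t)"
      using wW lw' w'nth unfolding ov_walks_def
      by (auto simp: w'_def dest: in_set_butlastD)
    with Suc obtain \<sigma> where s: "\<sigma> \<in> Av (Suc t + k - 1) {[3,1,2]}" and Ws: "W k \<sigma> = w'" by blast
    define n where "n = t + k"
    have sl: "length \<sigma> = n" and sp: "is_perm \<sigma>" and sa: "av312 \<sigma>"
      using s k1 avoids_imp_av312[of \<sigma>] unfolding Av_def n_def by auto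
    have "w \<noteq> []" using lw by auto
    hence "e \<in> set w" by (simp add: e_def)
    hence eA: "e \<in> Av k {[3,1,2]}" using wW unfolding ov_walks_def by blast
    have el: "length e = k" and ep: "is_perm e" and ea: "av312 e"
      using eA avoids_imp_av312[of e] unfolding Av_def by auto
    have adj: "ov_end k (w!t) = ov_start k (w!Suc t)" using wW by (simp add: ov_walks_def)
    have wt: "w!t = std (drop t \<sigma>)"
    proof -
      have "w!t = W k \<sigma> ! t" using w'nth Ws by simp
      also have "\<dots> = pat {t..<t+k} \<sigma>" using sl k1 by (simp add: W_def n_def nth_append)
      also have "\<dots> = std (drop t \<sigma>)" using sl by (simp add: pat_window n_def)
      finally show ?thesis .
    qed
    have we: "w!Suc t = e" using wsplit lw' by (simp add: nth_append)
    have lwin: "std (drop (n - (k-1)) \<sigma>) = std (take (k-1) e)"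
    proof -
      have d: "distinct (drop t \<sigma>)" using sp by (simp add: is_perm_def)
      have "ov_end k (w!t) = std (drop 1 (drop t \<sigma>))"
        unfolding wt using ov_end_std[OF _ k1 d] sl by (simp add: n_def)
      moreover have "drop 1 (drop t \<sigma>) = drop (n - (k-1)) \<sigma>" using k1 by (simp add: n_def)
      ultimately show ?thesis using adj we ov_start_eq by simp
    qed
    obtain \<tau> where t: "is_perm \<tau>" "av312 \<tau>" "length \<tau> = Suc n" "W k \<tau> = W k \<sigma> @ [e]"
      using extend[OF sp sa sl k1 _ ep el ea lwin] k1 by (auto simp: n_def)
    have "\<tau> \<in> Av (Suc (Suc t) + k - 1) {[3,1,2]}" using t k1 by (simp add: Av_def avoids_iff avoids_iff' n_def)
    moreover have "W k \<tau> = w" using t Ws wsplit by simp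
    ultimately show "\<exists>\<sigma>\<in>Av (Suc (Suc t) + k - 1) {[3,1,2]}. W k \<sigma> = w" by blast
  qed
qed

theorem mainTheorem4:
  fixes k m :: nat
  assumes "k \<ge> 1" and "m \<ge> k"
  shows "\<forall>w \<in> ov_walks k {[3,1,2]} (m - k + 1). \<exists>\<sigma> \<in> Av m {[3,1,2]}. W k \<sigma> = w"
proof -
  have "m - k + 1 = Suc (m - k)" "Suc (m - k) + k - 1 = m" using assms by auto
  thus ?thesis using main_aux[OF assms(1), of "m - k"] by simp
qed


end
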